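(* Let $\Lambda$ be a lattice of rank $s$ with basis $\mathcal V=(v_1,\ldots,v_s)$, $\bar a=(a_1,\ldots,a_t)\in(\mathcal F^0(\Lambda,\bar K))^t$, and $\bar n=(n_1,\ldots,n_s)$ with each $n_i$ a positive integer coprime to $p$. Let $G=\Lambda/\Lambda_{\bar n,\mathcal V}$, $\bar a_*$ the pushforward, and let $q_0=p^{r_0}$ ($r_0>0$) be minimal such that $\widehat{(a_j)_*}(G^\vee)\subseteq\mathrm{GF}(q_0)$ for all $j=1,\ldots,t$. (a) The following are equivalent: (i) there exists a nonzero $\Lambda_{\bar n,\mathcal V}$-periodic $\bar a$-harmonic function $\Lambda\to\bar K$; (ii) $V(\bar a_* )\ne\emptyset$; (iii) the system $\sigma_{a_j,\mathcal V}(x_1,\ldots,x_s)=0$ ($j=1,\ldots,t$), $x_i^{n_i}=1$ ($i=1,\ldots,s$) has a solution $\xi\in(\bar K^\times)^s$. (b) $\ker(\Delta_{\bar a_*})\subseteq(\mathcal F(G,\bar K),* )$ coincides with the principal convolution ideal generated by the convolution product $\prod_{j=1}^t\big(\delta_0-\Delta_{(a_j)_*}^{q_0-1}(\delta_0)\big)$, and the operator $\prod_{j=1}^t\big(1_G-\Delta_{(a_j)_*}^{q_0-1}\big)$ is the orthogonal projection of $\mathcal F(G,\bar K)$ onto $\ker(\Delta_{\bar a_*})$. (c) If $t=1$ and $a_1=a$, then (i)–(iii) are equivalent to each of: (iv) $\Delta_{a_*}^{q_0-1}(\delta_0)\ne\delta_0$, equivalently $\Delta_{a_*}^{q_0-1}\ne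 1_G$; (v) the sequence $\big(\Delta_{a_*}^k(\delta_0)\big)_{k\ge0}$ in $\mathcal F(G,\bar K)$ is not periodic.
   Context: $K=\mathrm{GF}(p)$, $\bar K$ an algebraic closure. For an abelian group $G$, $\mathcal F(G,\bar K)$, $\mathcal F^0(G,\bar K)$ denote all, resp. finitely supported, functions $G\to\bar K$; $(f*a)(g)=\sum_hf(h)a(g-h)$, $\Delta_af=f*a$, $\Delta_{\bar a}$ has kernel $\bigcap_j\ker\Delta_{a_j}$; $f$ is $\bar a$-harmonic if $f*a_j=0$ for all $j$. $\delta_0$ is the delta function at $0$, $1_G$ the identity operator. $\Lambda_{\bar n,\mathcal V}=\sum_in_i\mathbb Zv_i$; a function is $\Lambda_{\bar n,\mathcal V}$-periodic if invariant under translations by $\Lambda_{\bar n,\mathcal V}$. With $\pi:\Lambda\to G$ the projection, $(a_j)_*(c)=\sum_{v\in\pi^{-1}(c)}a_j(v)$ and $\bar a_*=((a_j)_* )_j$. $G^\vee$ is the group of homomorphisms $G\to\bar K^\times$, $\hat b(g^\vee)=\sum_{g\in G}b(g)g^\vee(g)$, $V(\bar a_* )=\{g^\vee:\widehat{(a_j)_*}(g^\vee)=0\ \forall j\}$. The symbol is $\sigma_{a,\mathcal V}=\sum_{v=\sum\alpha_iv_i}a(v)x_1^{-\alpha_1}\cdots x_s^{-\alpha_s}$. Orthogonality is with respect to $\langle f_1,f_2\rangle_1=\frac1{|G|}\sum_{g\in G}f_1(g)f_2(-g)$. The principal convolution ideal generated by $f$ is $\{f*c:c\in\mathcal F(G,\bar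 K)\}$. *)

theory Defs
  imports Complex_Main "HOL-Computational_Algebra.Polynomial" "HOL-Library.Function_Algebras"
begin

definition alg_closure_GFp :: "nat \<Rightarrow> 'k::field itself \<Rightarrow> bool" where
  "alg_closure_GFp p _ \<longleftrightarrow> prime p \<and> CHAR('k) = p
     \<and> (\<forall>P::'k poly. degree P > 0 \<longrightarrow> (\<exists>x. poly P x = 0))
     \<and> (\<forall>x::'k. \<exists>r>0. x ^ (p ^ r) = x)"

(* The lattice \<Lambda> is identified with \<int>^s via its basis V: v = \<Sum> (v i) v_i. *)
type_synonym 's lat = "'s \<Rightarrow> int"

definition fin_supp :: "('s lat \<Rightarrow> 'k::zero) \<Rightarrow> bool" where
  "fin_supp a \<longleftrightarrow> finite {v. a v \<noteq> 0}"

definition conv_lat :: "('s lat \<Rightarrow> 'k::comm_ring_1) \<Rightarrow> ('s lat \<Rightarrow> 'k) \<Rightarrow> 's lat \<Rightarrow> 'k" where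
  "conv_lat f a g = (\<Sum>w\<in>{w. a w \<noteq> 0}. f (g - w) * a w)"

definition harmonic :: "nat \<Rightarrow> (nat \<Rightarrow> 's lat \<Rightarrow> 'k::comm_ring_1) \<Rightarrow> ('s lat \<Rightarrow> 'k) \<Rightarrow> bool" where
  "harmonic t a f \<longleftrightarrow> (\<forall>j<t. conv_lat f (a j) = (\<lambda>_. 0))"

(* invariance under the sublattice \<Lambda>_{n,V} = \<Sum> n_i \<int> v_i *)
definition periodic_lat :: "('s \<Rightarrow> nat) \<Rightarrow> ('s lat \<Rightarrow> 'k) \<Rightarrow> bool" where
  "periodic_lat n f \<longleftrightarrow> (\<forall>v i. f (v(i := v i + int (n i))) = f v)"

(* G = \<Lambda>/\<Lambda>_{n,V}, represented by reduced coordinate vectors *)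
definition Gset :: "('s \<Rightarrow> nat) \<Rightarrow> 's lat set" where
  "Gset n = {g. \<forall>i. 0 \<le> g i \<and> g i < int (n i)}"

definition red :: "('s \<Rightarrow> nat) \<Rightarrow> 's lat \<Rightarrow> 's lat" where
  "red n v = (\<lambda>i. v i mod int (n i))"

(* F(G, \<bar>K): functions on G, extended by 0 outside the set of representatives *)
definition FG :: "('s \<Rightarrow> nat) \<Rightarrow> ('s lat \<Rightarrow> 'k::zero) set" where
  "FG n = {f. \<forall>g. g \<notin> Gset n \<longrightarrow> f g = 0}"

definition convG :: "('s::finite \<Rightarrow> nat) \<Rightarrow> ('s lat \<Rightarrow> 'k::comm_ring_1) \<Rightarrow> ('s lat \<Rightarrow> 'k) \<Rightarrow> 's lat \<Rightarrow> 'k" where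
  "convG n f b g = (if g \<in> Gset n then (\<Sum>h\<in>Gset n. f h * b (red n (g - h))) else 0)"

definition deltaG :: "('s \<Rightarrow> nat) \<Rightarrow> 's lat \<Rightarrow> 'k::{zero,one}" where
  "deltaG n g = (if g = 0 then 1 else 0)"

definition pushfwd :: "('s \<Rightarrow> nat) \<Rightarrow> ('s lat \<Rightarrow> 'k::comm_ring_1) \<Rightarrow> 's lat \<Rightarrow> 'k" where
  "pushfwd n a c = (if c \<in> Gset n then (\<Sum>v\<in>{v. a v \<noteq> 0 \<and> red n v = c}. a v) else 0)"

definition DeltaG_pow :: "('s::finite \<Rightarrow> nat) \<Rightarrow> ('s lat \<Rightarrow> 'k::comm_ring_1) \<Rightarrow> nat \<Rightarrow> ('s lat \<Rightarrow> 'k) \<Rightarrow> ('s lat \<Rightarrow> 'k)" where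
  "DeltaG_pow n b k = ((\<lambda>f. convG n f b) ^^ k)"

definition kerG :: "('s::finite \<Rightarrow> nat) \<Rightarrow> nat \<Rightarrow> (nat \<Rightarrow> 's lat \<Rightarrow> 'k::comm_ring_1) \<Rightarrow> ('s lat \<Rightarrow> 'k) set" where
  "kerG n t b = {f \<in> FG n. \<forall>j<t. convG n f (b j) = (\<lambda>_. 0)}"

definition principal_ideal :: "('s::finite \<Rightarrow> nat) \<Rightarrow> ('s lat \<Rightarrow> 'k::comm_ring_1) \<Rightarrow> ('s lat \<Rightarrow> 'k) set" where
  "principal_ideal n P = {convG n P c | c. c \<in> FG n}"

fun conv_prod :: "('s::finite \<Rightarrow> nat) \<Rightarrow> (nat \<Rightarrow> 's lat \<Rightarrow> 'k::comm_ring_1) \<Rightarrow> nat \<Rightarrow> 's lat \<Rightarrow> 'k" where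
  "conv_prod n F 0 = deltaG n"
| "conv_prod n F (Suc t) = convG n (conv_prod n F t) (F t)"

fun op_prod :: "(nat \<Rightarrow> 'f \<Rightarrow> 'f) \<Rightarrow> nat \<Rightarrow> 'f \<Rightarrow> 'f" where
  "op_prod T 0 = id"
| "op_prod T (Suc t) = T t \<circ> op_prod T t"

definition innerG :: "('s::finite \<Rightarrow> nat) \<Rightarrow> ('s lat \<Rightarrow> 'k::field) \<Rightarrow> ('s lat \<Rightarrow> 'k) \<Rightarrow> 'k" where
  "innerG n f1 f2 = (\<Sum>g\<in>Gset n. f1 g * f2 (red n (- g))) / of_nat (card (Gset n))"

definition orth_proj :: "('s::finite \<Rightarrow> nat) \<Rightarrow> (('s lat \<Rightarrow> 'k::field) \<Rightarrow> ('s lat \<Rightarrow> 'k)) \<Rightarrow> ('s lat \<Rightarrow> 'k) set \<Rightarrow> bool" where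
  "orth_proj n T W \<longleftrightarrow> (\<forall>f\<in>FG n. T f \<in> W \<and> (\<forall>w\<in>W. innerG n (\<lambda>g. f g - T f g) w = 0))
      \<and> (\<forall>w\<in>W. T w = w)"

definition characters :: "('s::finite \<Rightarrow> nat) \<Rightarrow> ('s lat \<Rightarrow> 'k::field) set" where
  "characters n = {\<chi>. (\<forall>g\<in>Gset n. \<chi> g \<noteq> 0) \<and>
      (\<forall>g\<in>Gset n. \<forall>h\<in>Gset n. \<chi> (red n (g + h)) = \<chi> g * \<chi> h)}"

definition fhat :: "('s::finite \<Rightarrow> nat) \<Rightarrow> ('s lat \<Rightarrow> 'k::field) \<Rightarrow> ('s lat \<Rightarrow> 'k) \<Rightarrow> 'k" where
  "fhat n b \<chi> = (\<Sum>g\<in>Gset n. b g * \<chi> g)"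

definition Vset :: "('s::finite \<Rightarrow> nat) \<Rightarrow> nat \<Rightarrow> (nat \<Rightarrow> 's lat \<Rightarrow> 'k::field) \<Rightarrow> ('s lat \<Rightarrow> 'k) set" where
  "Vset n t b = {\<chi> \<in> characters n. \<forall>j<t. fhat n (b j) \<chi> = 0}"

definition symbol_eval :: "('s::finite lat \<Rightarrow> 'k::field) \<Rightarrow> ('s \<Rightarrow> 'k) \<Rightarrow> 'k" where
  "symbol_eval a x = (\<Sum>v\<in>{v. a v \<noteq> 0}. a v * (\<Prod>i\<in>UNIV. x i powi (- v i)))"

definition periodic_seq :: "(nat \<Rightarrow> 'a) \<Rightarrow> bool" where
  "periodic_seq u \<longleftrightarrow> (\<exists>T>0. \<forall>k. u (k + T) = u k)"

end

theory Submission
  imports Defs "HOL-Library.FuncSet"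
begin

lemma prod_linear_dvd:
  fixes Q :: "'k::field poly"
  assumes "finite S" "\<forall>r\<in>S. poly Q r = 0"
  shows "(\<Prod>r\<in>S. [:-r, 1:]) dvd Q"
  using assms
proof (induction S rule: finite_induct)
  case empty then show ?case by simp
next
  case (insert r S)
  then obtain H where H: "Q = (\<Prod>r\<in>S. [:-r, 1:]) * H" by auto
  have "poly (\<Prod>r\<in>S. [:-r, 1:]) r \<noteq> 0"
    using insert(1,2) by (auto simp: poly_prod)
  moreover have "poly Q r = 0" using insert by auto
  ultimately have "poly H r = 0" using H by simp
  then obtain H' where "H = [:-r,1:] * H'" using poly_eq_0_iff_dvd by (metis dvdE)
  then have "Q = ([:-r,1:] * (\<Prod>r\<in>S. [:-r, 1:])) * H'" using H by (simp only: mult_ac)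
  then show ?case using insert(1,2) by (metis dvdI prod.insert)
qed

lemma many_roots:
  fixes m :: nat
  assumes alg: "\<forall>P::'k::field poly. degree P > 0 \<longrightarrow> (\<exists>x. poly P x = 0)"
    and m: "m > 0" "of_nat m \<noteq> (0::'k)"
  shows "card {z::'k. z ^ m = 1} \<ge> m"
proof (rule ccontr)
  assume lt: "\<not> m \<le> card {z::'k. z ^ m = 1}"
  define Q :: "'k poly" where "Q = monom 1 m + [:-1:]"
  define R where "R = {z::'k. z ^ m = 1}"
  have pQ: "poly Q z = z ^ m - 1" for z by (simp add: Q_def poly_monom)
  have dQ: "degree Q = m" using m unfolding Q_def
    by (subst degree_add_eq_left) (auto simp: degree_monom_eq)
  have Q0: "Q \<noteq> 0" using dQ m by auto
  have RQ: "R = {z. poly Q z = 0}" by (auto simp: R_def pQ)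
  have fR: "finite R" using RQ poly_roots_finite[OF Q0] by simp
  define D where "D = (\<Prod>r\<in>R. [:-r, 1:])"
  have "D dvd Q" unfolding D_def by (rule prod_linear_dvd[OF fR]) (auto simp: RQ)
  then obtain H where QH: "Q = D * H" by (auto elim: dvdE)
  have D0: "D \<noteq> 0" unfolding D_def using fR by (auto)
  have H0: "H \<noteq> 0" using QH Q0 by auto
  have dD: "degree D = card R" unfolding D_def
    by (subst degree_prod_eq_sum_degree) auto
  have "degree Q = degree D + degree H" using QH D0 H0 by (simp add: degree_mult_eq)
  with dQ dD lt have "degree H > 0" by (simp add: R_def)
  then obtain r0 where r0: "poly H r0 = 0" using alg by auto
  then have "r0 \<in> R" using QH RQ by auto
  then have Dr: "D = [:-r0,1:] * (\<Prod>r\<in>R-{r0}. [:-r, 1:])" unfolding D_def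
    using fR by (simp add: prod.remove)
  define W where "W = (\<Prod>r\<in>R-{r0}. [:-r, 1:]) * H"
  have QW: "Q = [:-r0,1:] * W" unfolding W_def using QH Dr by (simp only: mult.assoc)
  have W: "poly W r0 = 0" unfolding W_def using r0 by simp
  have "pderiv Q = [:-r0,1:] * pderiv W + W * pderiv [:-r0,1:]"
    using QW pderiv_mult by blast
  then have "poly (pderiv Q) r0 = 0" using W by simp
  moreover have "pderiv Q = monom (of_nat m) (m - 1)" unfolding Q_def
    by (simp add: pderiv_add pderiv_monom)
  ultimately have "of_nat m * r0 ^ (m - 1) = 0" by (simp add: poly_monom)
  then have "r0 ^ (m - 1) = 0" using m by simp
  moreover have "r0 ^ m = 1" using \<open>r0 \<in> R\<close> by (simp add: R_def)
  ultimately show False using m by (cases m) auto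
qed

lemma nonvanish_root:
  fixes m :: nat and P :: "'k::field poly"
  assumes alg: "\<forall>P::'k::field poly. degree P > 0 \<longrightarrow> (\<exists>x. poly P x = 0)"
    and m: "m > 0" "of_nat m \<noteq> (0::'k)"
    and P: "P \<noteq> 0" "degree P < m"
  shows "\<exists>z. z ^ m = 1 \<and> poly P z \<noteq> 0"
proof (rule ccontr)
  assume "\<not> ?thesis"
  then have "{z::'k. z ^ m = 1} \<subseteq> {x. poly P x = 0}" by auto
  then have "card {z::'k. z ^ m = 1} \<le> card {x. poly P x = 0}"
    using poly_roots_finite[OF P(1)] by (rule card_mono[rotated])
  also have "\<dots> \<le> degree P" by (rule card_poly_roots_bound[OF P(1)])
  finally show False using many_roots[OF alg m] P(2) by linarith
qed

lemma Gset_PiE: "Gset n = Pi\<^sub>E UNIV (\<lambda>i. {0..<int (n i)})"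
  by (auto simp: Gset_def PiE_def Pi_def extensional_def)

lemma finite_Gset: "finite (Gset (n::'s::finite \<Rightarrow> nat))"
  unfolding Gset_PiE by (rule finite_PiE) auto

lemma zero_Gset: "\<forall>i. n i > 0 \<Longrightarrow> 0 \<in> Gset n"
  by (auto simp: Gset_def)

lemma red_Gset: "\<forall>i. n i > 0 \<Longrightarrow> red n v \<in> Gset n"
  by (auto simp: Gset_def red_def)

lemma red_id: "g \<in> Gset n \<Longrightarrow> red n g = g"
  by (auto simp: Gset_def red_def fun_eq_iff)

lemma red_add_red: "red n (red n u + red n w) = red n (u + w)"
  by (auto simp: red_def fun_eq_iff mod_add_eq)

lemma red_red: "red n (red n u) = red n u"
  by (auto simp: red_def fun_eq_iff)

lemma red_diff_left: "red n (red n u - w) = red n (u - w)"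
  by (auto simp: red_def fun_eq_iff mod_diff_left_eq)

lemma red_diff_right: "red n (u - red n w) = red n (u - w)"
  by (auto simp: red_def fun_eq_iff mod_diff_right_eq)

definition chi :: "('s::finite \<Rightarrow> 'k::field) \<Rightarrow> 's lat \<Rightarrow> 'k" where
  "chi z g = (\<Prod>i\<in>UNIV. z i powi g i)"

lemma root_nz: "\<forall>i. n i > 0 \<Longrightarrow> \<forall>i. (z::'s \<Rightarrow> 'k::field) i ^ n i = 1 \<Longrightarrow> z i \<noteq> 0"
  by (metis power_0_left zero_neq_one neq0_conv)

lemma chi_add: "(\<forall>i. z i \<noteq> 0) \<Longrightarrow> chi z (u + w) = chi z u * chi z w"
  by (simp add: chi_def power_int_add prod.distrib)

lemma chi_zero: "chi z 0 = 1"
  by (simp add: chi_def)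

lemma chi_nz: "(\<forall>i. z i \<noteq> 0) \<Longrightarrow> chi z g \<noteq> 0"
  by (simp add: chi_def)

lemma powi_mod:
  fixes x :: "'k::field"
  assumes "x ^ m = 1" "x \<noteq> 0"
  shows "x powi (k mod int m) = x powi k"
proof -
  have e: "x powi (int m * (k div int m)) = 1" using assms by (simp add: power_int_mult)
  have "x powi k = x powi (int m * (k div int m) + k mod int m)" by simp
  also have "\<dots> = x powi (int m * (k div int m)) * x powi (k mod int m)"
    using assms(2) power_int_add[of x "int m * (k div int m)" "k mod int m"] by blast
  finally show ?thesis using e by simp
qed

lemma chi_red:
  assumes "\<forall>i. n i > 0" "\<forall>i. (z::'s::finite \<Rightarrow> 'k::field) i ^ n i = 1"
  shows "chi z (red n v) = chi z v"
  unfolding chi_def red_def using powi_mod[of "z _" "n _"] root_nz[OF assms] assms(2) by simp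

lemma chi_char:
  assumes "\<forall>i. n i > 0" "\<forall>i. (z::'s::finite \<Rightarrow> 'k::field) i ^ n i = 1"
  shows "chi z \<in> characters n"
proof -
  have nz: "\<forall>i. z i \<noteq> 0" using root_nz[OF assms] by auto
  show ?thesis
  unfolding characters_def using chi_nz[OF nz] chi_add[OF nz] chi_red[OF assms] by auto
qed


lemma chi_upd:
  fixes z' :: "'s::finite \<Rightarrow> 'k::field"
  assumes "h i = 0"
  shows "chi (z'(i := w)) (h(i := int k)) = w ^ k * chi z' h"
proof -
  have "chi (z'(i := w)) (h(i := int k)) = w powi int k * (\<Prod>j\<in>UNIV-{i}. z' j powi h j)"
    unfolding chi_def by (subst prod.remove[of UNIV i]) (auto intro!: prod.cong)
  moreover have "chi z' h = (\<Prod>j\<in>UNIV-{i}. z' j powi h j)"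
    unfolding chi_def using assms by (subst prod.remove[of UNIV i]) auto
  ultimately show ?thesis by simp
qed

lemma L3_ind:
  fixes n :: "'s::finite \<Rightarrow> nat"
  assumes npos: "\<forall>i. n i > 0"
    and L2: "\<forall>i. \<forall>P::'k::field poly. P \<noteq> 0 \<longrightarrow> degree P < n i \<longrightarrow> (\<exists>z. z ^ n i = 1 \<and> poly P z \<noteq> 0)"
    and "finite S"
  shows "\<forall>c::'s lat \<Rightarrow> 'k. (\<forall>g. c g \<noteq> 0 \<longrightarrow> g \<in> Gset n \<and> (\<forall>i. i \<notin> S \<longrightarrow> g i = 0)) \<longrightarrow> (\<exists>g. c g \<noteq> 0)
     \<longrightarrow> (\<exists>z. (\<forall>i. z i ^ n i = 1) \<and> (\<Sum>g\<in>Gset n. c g * chi z g) \<noteq> 0)"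
  using \<open>finite S\<close>
proof (induction S rule: finite_induct)
  case empty
  show ?case
  proof (intro allI impI)
    fix c :: "'s lat \<Rightarrow> 'k"
    assume supp: "\<forall>g. c g \<noteq> 0 \<longrightarrow> g \<in> Gset n \<and> (\<forall>i. i \<notin> {} \<longrightarrow> g i = 0)" and ex: "\<exists>g. c g \<noteq> 0"
    have c0: "\<forall>g. g \<noteq> 0 \<longrightarrow> c g = 0" using supp by (auto simp: fun_eq_iff)
    then have "c 0 \<noteq> 0" using ex by metis
    have "(\<Sum>g\<in>Gset n. c g * chi (\<lambda>_. 1) g) = (\<Sum>g\<in>Gset n. if g = 0 then c 0 else 0)"
      by (rule sum.cong) (auto simp: chi_def c0)
    also have "\<dots> = c 0" by (subst sum.delta[OF finite_Gset]) (simp add: zero_Gset[OF npos])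
    finally show "\<exists>z. (\<forall>i. z i ^ n i = 1) \<and> (\<Sum>g\<in>Gset n. c g * chi z g) \<noteq> 0"
      using \<open>c 0 \<noteq> 0\<close> by (intro exI[of _ "\<lambda>_. 1"]) auto
  qed
next
  case (insert i S)
  show ?case
  proof (intro allI impI)
    fix c :: "'s lat \<Rightarrow> 'k"
    assume supp: "\<forall>g. c g \<noteq> 0 \<longrightarrow> g \<in> Gset n \<and> (\<forall>j. j \<notin> insert i S \<longrightarrow> g j = 0)"
      and ex: "\<exists>g. c g \<noteq> 0"
    define ck where "ck k g = (if g i = 0 then c (g(i := k)) else 0)" for k :: int and g
    obtain g0 where g0: "c g0 \<noteq> 0" using ex by auto
    have g0G: "g0 \<in> Gset n" using supp g0 by auto
    define k0 where "k0 = g0 i"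
    have k0r: "0 \<le> k0" "k0 < int (n i)" using g0G by (auto simp: Gset_def k0_def)
    have "ck k0 (g0(i := 0)) \<noteq> 0" using g0 by (simp add: ck_def k0_def)
    moreover have "\<forall>g. ck k0 g \<noteq> 0 \<longrightarrow> g \<in> Gset n \<and> (\<forall>j. j \<notin> S \<longrightarrow> g j = 0)"
    proof (intro allI impI)
      fix g assume "ck k0 g \<noteq> 0"
      then have gi: "g i = 0" and cg: "c (g(i := k0)) \<noteq> 0" by (auto simp: ck_def split: if_splits)
      from supp cg have A: "g(i:=k0) \<in> Gset n" and B: "\<forall>j. j \<notin> insert i S \<longrightarrow> (g(i:=k0)) j = 0"
        by blast+
      show "g \<in> Gset n \<and> (\<forall>j. j \<notin> S \<longrightarrow> g j = 0)"
      proof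
        show "g \<in> Gset n" unfolding Gset_def
        proof (intro CollectI allI)
          fix j show "0 \<le> g j \<and> g j < int (n j)"
            proof (cases "j = i")
              case True then show ?thesis using gi npos by simp
            next
              case False
              from A have "0 \<le> (g(i:=k0)) j \<and> (g(i:=k0)) j < int (n j)" by (simp add: Gset_def)
              then show ?thesis using False by simp
            qed
        qed
        show "\<forall>j. j \<notin> S \<longrightarrow> g j = 0" using B gi by (metis fun_upd_other insert_iff)
      qed
    qed
    ultimately obtain z' where z'r: "\<forall>j. z' j ^ n j = 1" and z'ne: "(\<Sum>g\<in>Gset n. ck k0 g * chi z' g) \<noteq> 0"
      using insert.IH by blast
    define C where "C k = (\<Sum>g\<in>Gset n. ck k g * chi z' g)" for k
    define P where "P = (\<Sum>k<n i. monom (C (int k)) k)"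
    have coeffP: "coeff P m = (if m < n i then C (int m) else 0)" for m
      unfolding P_def by (simp add: coeff_sum coeff_monom)
    have "coeff P (nat k0) \<noteq> 0" using coeffP k0r z'ne by (simp add: C_def)
    then have P0: "P \<noteq> 0" by auto
    have "degree P \<le> n i - 1" by (rule degree_le) (auto simp: coeffP)
    then have dP: "degree P < n i" using npos[rule_format, of i] by linarith
    obtain w where w: "w ^ n i = 1" "poly P w \<noteq> 0" using L2 P0 dP by blast
    define z where "z = z'(i := w)"
    have zr: "\<forall>j. z j ^ n j = 1" using z'r w by (simp add: z_def)
    define H0 where "H0 = {h \<in> Gset n. h i = 0}"
    have fH0: "finite H0" unfolding H0_def by (rule finite_subset[OF _ finite_Gset]) auto
    have Ck: "C (int k) * w ^ k = (\<Sum>h\<in>H0. c (h(i := int k)) * chi z (h(i := int k)))" for k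
    proof -
      have "C (int k) * w ^ k = (\<Sum>h\<in>Gset n. ck (int k) h * chi z' h * w ^ k)"
        by (simp add: C_def sum_distrib_right)
      also have "\<dots> = (\<Sum>h\<in>Gset n. if h i = 0 then c (h(i := int k)) * chi z (h(i := int k)) else 0)"
        by (rule sum.cong) (auto simp: ck_def z_def chi_upd)
      also have "\<dots> = (\<Sum>h\<in>H0. c (h(i := int k)) * chi z (h(i := int k)))"
        unfolding H0_def by (rule sum.inter_filter[symmetric, OF finite_Gset])
      finally show ?thesis .
    qed
    have "poly P w = (\<Sum>k<n i. C (int k) * w ^ k)" by (simp add: P_def poly_sum poly_monom)
    also have "\<dots> = (\<Sum>k<n i. \<Sum>h\<in>H0. c (h(i := int k)) * chi z (h(i := int k)))"
      using Ck by simp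
    also have "\<dots> = (\<Sum>(k,h)\<in>{..<n i} \<times> H0. c (h(i := int k)) * chi z (h(i := int k)))"
      by (rule sum.cartesian_product)
    also have "\<dots> = (\<Sum>g\<in>Gset n. c g * chi z g)"
    proof (rule sum.reindex_bij_witness[where i = "\<lambda>g. (nat (g i), g(i := 0))" and j = "\<lambda>(k,h). h(i := int k)"])
      fix a assume "a \<in> {..<n i} \<times> H0"
      then show "(nat ((case a of (k, h) \<Rightarrow> h(i := int k)) i), (case a of (k, h) \<Rightarrow> h(i := int k))(i := 0)) = a"
        by (cases a) (auto simp: H0_def fun_upd_idem_iff)
    next
      fix a assume "a \<in> {..<n i} \<times> H0"
      then show "(case a of (k, h) \<Rightarrow> h(i := int k)) \<in> Gset n"
        unfolding Gset_def
      proof (cases a, intro CollectI allI)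
        fix k h j assume a: "a = (k, h)"
        show "0 \<le> (case a of (k, h) \<Rightarrow> h(i := int k)) j \<and> (case a of (k, h) \<Rightarrow> h(i := int k)) j < int (n j)"
        proof (cases "j = i")
          case True then show ?thesis using \<open>a \<in> _\<close> a by simp
        next
          case False then show ?thesis using \<open>a \<in> _\<close> a by (simp add: H0_def Gset_def)
        qed
      qed
    next
      fix b assume "b \<in> Gset n"
      then show "(case (nat (b i), b(i := 0)) of (k, h) \<Rightarrow> h(i := int k)) = b"
        by (simp add: Gset_def)
    next
      fix b assume "b \<in> Gset n"
      then show "(nat (b i), b(i := 0)) \<in> {..<n i} \<times> H0"
      proof -
        have "0 \<le> b i \<and> b i < int (n i)" using \<open>b \<in> Gset n\<close> by (simp add: Gset_def)
        moreover have "b(i := 0) \<in> Gset n" using \<open>b \<in> Gset n\<close> npos by (simp add: Gset_def)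
        ultimately show ?thesis by (simp add: H0_def nat_less_iff)
      qed
    next
      fix a assume "a \<in> {..<n i} \<times> H0"
      then show "c (case a of (k, h) \<Rightarrow> h(i := int k)) * chi z (case a of (k, h) \<Rightarrow> h(i := int k)) =
          (case a of (k, h) \<Rightarrow> c (h(i := int k)) * chi z (h(i := int k)))" by auto
    qed
    finally show "\<exists>z. (\<forall>i. z i ^ n i = 1) \<and> (\<Sum>g\<in>Gset n. c g * chi z g) \<noteq> 0"
      using w zr by metis
  qed
qed

lemma red_add_right: "red n (u + red n w) = red n (u + w)"
  by (auto simp: red_def fun_eq_iff mod_add_right_eq)

lemma red_add_left: "red n (red n u + w) = red n (u + w)"
  by (auto simp: red_def fun_eq_iff mod_add_left_eq)

lemma sum_shift:
  assumes npos: "\<forall>i. n i > 0"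
  shows "(\<Sum>g\<in>Gset n. F g) = (\<Sum>k\<in>Gset n. F (red n (h + k)))"
proof (rule sum.reindex_bij_witness[where i = "\<lambda>k. red n (h + k)" and j = "\<lambda>g. red n (g - h)"])
  fix a assume "a \<in> Gset n"
  then show "red n (h + red n (a - h)) = a" by (simp add: red_add_right red_id)
  show "red n (a - h) \<in> Gset n" by (rule red_Gset[OF npos])
  show "F (red n (h + red n (a - h))) = F a" using \<open>a \<in> Gset n\<close> by (simp add: red_add_right red_id)
next
  fix b assume "b \<in> Gset n"
  then show "red n (red n (h + b) - h) = b" by (simp add: red_diff_left red_id)
  show "red n (h + b) \<in> Gset n" by (rule red_Gset[OF npos])
qed

lemma char_mult: "\<chi> \<in> characters n \<Longrightarrow> g \<in> Gset n \<Longrightarrow> h \<in> Gset n \<Longrightarrow> \<chi> (red n (g + h)) = \<chi> g * \<chi> h"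
  by (simp add: characters_def)

lemma char_zero:
  assumes npos: "\<forall>i. n i > 0" and "\<chi> \<in> characters n"
  shows "\<chi> 0 = 1"
proof -
  have z: "0 \<in> Gset n" by (rule zero_Gset[OF npos])
  have "\<chi> (red n (0 + 0)) = \<chi> 0 * \<chi> 0" by (rule char_mult[OF assms(2) z z])
  moreover have "red n (0 + 0) = 0" using red_id[OF z] by simp
  moreover have "\<chi> 0 \<noteq> 0" using assms(2) z by (simp add: characters_def)
  ultimately show ?thesis by simp
qed

lemma fhat_conv:
  assumes npos: "\<forall>i. n i > 0" and chi: "\<chi> \<in> characters n"
  shows "fhat n (convG n f b) \<chi> = fhat n f \<chi> * fhat n b \<chi>"
proof -
  have inner: "(\<Sum>g\<in>Gset n. b (red n (g - h)) * \<chi> g) = \<chi> h * fhat n b \<chi>" if h: "h \<in> Gset n" for h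
  proof -
    have "(\<Sum>g\<in>Gset n. b (red n (g - h)) * \<chi> g) = (\<Sum>k\<in>Gset n. b (red n (red n (h + k) - h)) * \<chi> (red n (h + k)))"
      using sum_shift[OF npos, of "\<lambda>g. b (red n (g - h)) * \<chi> g" h] by simp
    also have "\<dots> = (\<Sum>k\<in>Gset n. \<chi> h * (b k * \<chi> k))"
      by (rule sum.cong) (auto simp: red_diff_left red_id char_mult[OF chi h])
    finally show ?thesis by (simp add: fhat_def sum_distrib_left)
  qed
  have "fhat n (convG n f b) \<chi> = (\<Sum>g\<in>Gset n. (\<Sum>h\<in>Gset n. f h * b (red n (g - h))) * \<chi> g)"
    unfolding fhat_def convG_def by (rule sum.cong) auto
  also have "\<dots> = (\<Sum>h\<in>Gset n. f h * (\<Sum>g\<in>Gset n. b (red n (g - h)) * \<chi> g))"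
  proof -
    have "(\<Sum>g\<in>Gset n. (\<Sum>h\<in>Gset n. f h * b (red n (g - h))) * \<chi> g)
        = (\<Sum>g\<in>Gset n. \<Sum>h\<in>Gset n. f h * (b (red n (g - h)) * \<chi> g))"
      by (simp add: sum_distrib_right mult.assoc)
    also have "\<dots> = (\<Sum>h\<in>Gset n. \<Sum>g\<in>Gset n. f h * (b (red n (g - h)) * \<chi> g))"
      by (rule sum.swap)
    also have "\<dots> = (\<Sum>h\<in>Gset n. f h * (\<Sum>g\<in>Gset n. b (red n (g - h)) * \<chi> g))"
      by (simp add: sum_distrib_left)
    finally show ?thesis .
  qed
  also have "\<dots> = (\<Sum>h\<in>Gset n. f h * \<chi> h * fhat n b \<chi>)"
    by (rule sum.cong) (auto simp: inner mult.assoc)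
  finally show ?thesis by (simp add: fhat_def sum_distrib_right)
qed

lemma fhat_delta:
  assumes npos: "\<forall>i. n i > 0" and "\<chi> \<in> characters n"
  shows "fhat n (deltaG n) \<chi> = 1"
proof -
  have "fhat n (deltaG n) \<chi> = (\<Sum>g\<in>Gset n. if g = 0 then \<chi> 0 else 0)"
    unfolding fhat_def deltaG_def by (rule sum.cong) auto
  also have "\<dots> = \<chi> 0" by (subst sum.delta[OF finite_Gset]) (simp add: zero_Gset[OF npos])
  finally show ?thesis using char_zero[OF assms] by simp
qed

lemma fhat_diff: "fhat n (\<lambda>g. u g - v g) \<chi> = fhat n u \<chi> - fhat n v \<chi>"
  by (simp add: fhat_def sum_subtractf left_diff_distrib)

lemma fhat_zero: "fhat n (\<lambda>_. 0) \<chi> = 0"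
  by (simp add: fhat_def)

lemma FG_conv: "convG n f b \<in> FG n"
  by (simp add: FG_def convG_def)

lemma FG_delta: "\<forall>i. n i > 0 \<Longrightarrow> deltaG n \<in> FG n"
  using zero_Gset by (auto simp: FG_def deltaG_def)

lemma FG_diff: "(u::'s lat \<Rightarrow> 'k::ab_group_add) \<in> FG n \<Longrightarrow> v \<in> FG n \<Longrightarrow> (\<lambda>g. u g - v g) \<in> FG n"
  by (auto simp: FG_def)

lemma FG_zero: "(\<lambda>_. 0) \<in> FG n"
  by (simp add: FG_def)

lemma FG_pow: "f \<in> FG n \<Longrightarrow> DeltaG_pow n b k f \<in> FG n"
  by (induction k) (auto simp: DeltaG_pow_def FG_conv)

lemma fhat_pow:
  assumes npos: "\<forall>i. n i > 0" and chi: "\<chi> \<in> characters n"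
  shows "fhat n (DeltaG_pow n b k f) \<chi> = fhat n f \<chi> * fhat n b \<chi> ^ k"
  by (induction k) (auto simp: DeltaG_pow_def fhat_conv[OF npos chi])

lemma fhat_chi: "fhat n f (chi z) = (\<Sum>g\<in>Gset n. f g * chi z g)"
  by (simp add: fhat_def)

lemma L3:
  fixes n :: "'s::finite \<Rightarrow> nat"
  assumes npos: "\<forall>i. n i > 0"
    and L2: "\<forall>i. \<forall>P::'k::field poly. P \<noteq> 0 \<longrightarrow> degree P < n i \<longrightarrow> (\<exists>z. z ^ n i = 1 \<and> poly P z \<noteq> 0)"
    and f: "(f::'s lat \<Rightarrow> 'k) \<in> FG n" "f \<noteq> (\<lambda>_. 0)"
  shows "\<exists>z. (\<forall>i. z i ^ n i = 1) \<and> fhat n f (chi z) \<noteq> 0"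
proof -
  have A: "\<exists>g. f g \<noteq> 0" using f(2) by auto
  have B: "\<forall>g. f g \<noteq> 0 \<longrightarrow> g \<in> Gset n \<and> (\<forall>i. i \<notin> UNIV \<longrightarrow> g i = 0)"
    using f(1) by (auto simp: FG_def)
  have "\<exists>z. (\<forall>i. z i ^ n i = 1) \<and> (\<Sum>g\<in>Gset n. f g * chi z g) \<noteq> 0"
    using L3_ind[OF npos L2 finite_UNIV] B A by blast
  then show ?thesis by (simp add: fhat_chi)
qed

lemma complete:
  fixes n :: "'s::finite \<Rightarrow> nat"
  assumes npos: "\<forall>i. n i > 0"
    and L2: "\<forall>i. \<forall>P::'k::field poly. P \<noteq> 0 \<longrightarrow> degree P < n i \<longrightarrow> (\<exists>z. z ^ n i = 1 \<and> poly P z \<noteq> 0)"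
    and f: "(f::'s lat \<Rightarrow> 'k) \<in> FG n" "\<forall>\<chi>\<in>characters n. fhat n f \<chi> = 0"
  shows "f = (\<lambda>_. 0)"
  using L3[OF npos L2 f(1)] f(2) chi_char[OF npos] by blast

lemma complete_eq:
  fixes n :: "'s::finite \<Rightarrow> nat"
  assumes npos: "\<forall>i. n i > 0"
    and L2: "\<forall>i. \<forall>P::'k::field poly. P \<noteq> 0 \<longrightarrow> degree P < n i \<longrightarrow> (\<exists>z. z ^ n i = 1 \<and> poly P z \<noteq> 0)"
    and uv: "(u::'s lat \<Rightarrow> 'k) \<in> FG n" "v \<in> FG n" "\<forall>\<chi>\<in>characters n. fhat n u \<chi> = fhat n v \<chi>"
  shows "u = v"
proof -
  have "(\<lambda>g. u g - v g) = (\<lambda>_. 0)"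
    by (rule complete[OF npos L2 FG_diff[OF uv(1,2)]]) (simp add: fhat_diff uv(3))
  then show ?thesis by (simp add: fun_eq_iff)
qed


lemma fiber:
  assumes fa: "fin_supp a" and npos: "\<forall>i. n i > 0"
  shows "(\<Sum>v\<in>{v. a v \<noteq> 0}. a v * \<phi> (red n v)) = fhat n (pushfwd n a) \<phi>"
proof -
  have fS: "finite {v. a v \<noteq> 0}" using fa by (simp add: fin_supp_def)
  show "(\<Sum>v\<in>{v. a v \<noteq> 0}. a v * \<phi> (red n v)) = fhat n (pushfwd n a) \<phi>"
  proof -
    have "fhat n (pushfwd n a) \<phi> = (\<Sum>g\<in>Gset n. \<Sum>v\<in>{x. x \<in> {v. a v \<noteq> 0} \<and> red n x = g}. a v * \<phi> (red n v))"
      unfolding fhat_def pushfwd_def by (rule sum.cong) (auto simp: sum_distrib_right)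
    also have "\<dots> = (\<Sum>v\<in>{v. a v \<noteq> 0}. a v * \<phi> (red n v))"
      by (rule sum.group[OF fS finite_Gset]) (auto simp: red_Gset[OF npos])
    finally show ?thesis by simp
  qed
qed

lemma sum_refl:
  assumes npos: "\<forall>i. n i > 0"
  shows "(\<Sum>g\<in>Gset n. F g) = (\<Sum>k\<in>Gset n. F (red n (c - k)))"
proof (rule sum.reindex_bij_witness[where i = "\<lambda>k. red n (c - k)" and j = "\<lambda>k. red n (c - k)"])
  fix a assume "a \<in> Gset n"
  then show "red n (c - red n (c - a)) = a" by (simp add: red_diff_right red_id)
  show "red n (c - a) \<in> Gset n" by (rule red_Gset[OF npos])
  show "F (red n (c - red n (c - a))) = F a" using \<open>a \<in> Gset n\<close> by (simp add: red_diff_right red_id)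
next
  fix b assume "b \<in> Gset n"
  then show "red n (c - red n (c - b)) = b" by (simp add: red_diff_right red_id)
  show "red n (c - b) \<in> Gset n" by (rule red_Gset[OF npos])
qed

lemma periodic_one:
  assumes "periodic_lat n f"
  shows "f (v(i := v i + k * int (n i))) = f v"
proof -
  have up: "f (v(i := v i + int m * int (n i))) = f v" for m v
  proof (induction m arbitrary: v)
    case 0 then show ?case by simp
  next
    case (Suc m)
    have "f (v(i := v i + int (Suc m) * int (n i))) = f ((v(i := v i + int m * int (n i)))(i := (v(i := v i + int m * int (n i))) i + int (n i)))"
      by (simp add: algebra_simps)
    also have "\<dots> = f (v(i := v i + int m * int (n i)))"
      using assms[unfolded periodic_lat_def, rule_format, of "v(i := v i + int m * int (n i))" i] by simp
    also have "\<dots> = f v" by (rule Suc.IH)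
    finally show ?case .
  qed
  show ?thesis
  proof (cases "k \<ge> 0")
    case True
    then show ?thesis using up[of v "nat k"] by simp
  next
    case False
    define w where "w = v(i := v i + k * int (n i))"
    have "f (w(i := w i + int (nat (-k)) * int (n i))) = f w" by (rule up)
    moreover have "w(i := w i + int (nat (-k)) * int (n i)) = v" using False by (simp add: w_def)
    ultimately show ?thesis by (simp add: w_def)
  qed
qed

lemma periodic_red:
  fixes n :: "'s::finite \<Rightarrow> nat"
  assumes "periodic_lat n f"
  shows "f (red n v) = f v"
proof -
  have "\<forall>v. f (\<lambda>j. if j \<in> S then v j mod int (n j) else v j) = f v" if "finite S" for S
    using that
  proof (induction S rule: finite_induct)
    case empty then show ?case by simp
  next
    case (insert i S)
    show ?case
    proof
      fix v
      define w where "w = (\<lambda>j. if j \<in> S then v j mod int (n j) else v j)"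
      have "(\<lambda>j. if j \<in> insert i S then v j mod int (n j) else v j) = w(i := w i + (- (w i div int (n i))) * int (n i))"
        using insert(2) by (auto simp: w_def fun_eq_iff minus_div_mult_eq_mod[symmetric] algebra_simps)
      then have "f (\<lambda>j. if j \<in> insert i S then v j mod int (n j) else v j) = f w"
        using periodic_one[OF assms, of w i "- (w i div int (n i))"] by simp
      also have "\<dots> = f v" using insert(3) by (simp add: w_def)
      finally show "f (\<lambda>j. if j \<in> insert i S then v j mod int (n j) else v j) = f v" .
    qed
  qed
  from this[OF finite_UNIV] show ?thesis by (simp add: red_def)
qed


lemma conv_relation:
  fixes n :: "'s::finite \<Rightarrow> nat" and f :: "'s lat \<Rightarrow> 'k::field"
  assumes npos: "\<forall>i. n i > 0" and fa: "fin_supp a" and per: "periodic_lat n f"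
    and g: "g \<in> Gset n"
  shows "convG n (\<lambda>g. if g \<in> Gset n then f g else 0) (pushfwd n a) g = conv_lat f a g"
proof -
  define f0 where "f0 = (\<lambda>g. if g \<in> Gset n then f g else 0)"
  have "convG n f0 (pushfwd n a) g = (\<Sum>h\<in>Gset n. f0 h * pushfwd n a (red n (g - h)))"
    using g by (simp add: convG_def)
  also have "\<dots> = (\<Sum>k\<in>Gset n. f0 (red n (g - k)) * pushfwd n a (red n (g - red n (g - k))))"
    using sum_refl[OF npos, of "\<lambda>h. f0 h * pushfwd n a (red n (g - h))" g] by simp
  also have "\<dots> = (\<Sum>k\<in>Gset n. pushfwd n a k * f (red n (g - k)))"
    by (rule sum.cong) (auto simp: red_diff_right red_id f0_def red_Gset[OF npos])
  also have "\<dots> = fhat n (pushfwd n a) (\<lambda>k. f (red n (g - k)))" by (simp add: fhat_def)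
  also have "\<dots> = (\<Sum>v\<in>{v. a v \<noteq> 0}. a v * f (red n (g - red n v)))"
    by (rule fiber[OF fa npos, symmetric])
  also have "\<dots> = conv_lat f a g"
    unfolding conv_lat_def by (rule sum.cong) (auto simp: red_diff_right periodic_red[OF per])
  finally show ?thesis by (simp add: f0_def)
qed

lemma construct_iii:
  fixes n :: "'s::finite \<Rightarrow> nat" and \<xi> :: "'s \<Rightarrow> 'k::field"
  assumes npos: "\<forall>i. n i > 0" and xi: "\<forall>i. \<xi> i \<noteq> 0 \<and> \<xi> i ^ n i = 1"
    and sym: "\<forall>j<t. symbol_eval (a j) \<xi> = 0"
  shows "chi \<xi> \<noteq> (\<lambda>_. 0) \<and> periodic_lat n (chi \<xi>) \<and> harmonic t a (chi \<xi>)"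
proof (intro conjI)
  have nz: "\<forall>i. \<xi> i \<noteq> 0" and rt: "\<forall>i. \<xi> i ^ n i = 1" using xi by auto
  show "chi \<xi> \<noteq> (\<lambda>_. 0)"
  proof
    assume "chi \<xi> = (\<lambda>_. 0)"
    then have "chi \<xi> 0 = 0" by simp
    then show False using chi_zero[of \<xi>] by simp
  qed
  show "periodic_lat n (chi \<xi>)" unfolding periodic_lat_def
  proof (intro allI)
    fix v i
    have "red n (v(i := v i + int (n i))) = red n v" by (auto simp: red_def fun_eq_iff)
    then show "chi \<xi> (v(i := v i + int (n i))) = chi \<xi> v"
      using chi_red[OF npos rt, of "v(i := v i + int (n i))"] chi_red[OF npos rt, of v] by simp
  qed
  show "harmonic t a (chi \<xi>)" unfolding harmonic_def
  proof (intro allI impI)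
    fix j assume j: "j < t"
    have "conv_lat (chi \<xi>) (a j) g = 0" for g
    proof -
      have "conv_lat (chi \<xi>) (a j) g = (\<Sum>w\<in>{w. a j w \<noteq> 0}. chi \<xi> g * (a j w * chi \<xi> (- w)))"
        unfolding conv_lat_def
        by (rule sum.cong) (auto simp: chi_add[OF nz, of g "- _", simplified])
      also have "\<dots> = chi \<xi> g * symbol_eval (a j) \<xi>"
        by (simp add: symbol_eval_def sum_distrib_left chi_def)
      finally show ?thesis using sym j by simp
    qed
    then show "conv_lat (chi \<xi>) (a j) = (\<lambda>_. 0)" by auto
  qed
qed

lemma construct_ii:
  fixes n :: "'s::finite \<Rightarrow> nat" and \<chi> :: "'s lat \<Rightarrow> 'k::field"
  assumes npos: "\<forall>i. n i > 0" and fa: "\<forall>j<t. fin_supp (a j)"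
    and chi: "\<chi> \<in> Vset n t (\<lambda>j. pushfwd n (a j))"
  shows "\<exists>f. f \<noteq> (\<lambda>_. 0) \<and> periodic_lat n f \<and> harmonic t a f"
proof (intro exI conjI)
  define f where "f = (\<lambda>v. \<chi> (red n (- v)))"
  have ch: "\<chi> \<in> characters n" using chi by (simp add: Vset_def)
  have z: "0 \<in> Gset n" by (rule zero_Gset[OF npos])
  have "f 0 \<noteq> 0" using ch z red_id[OF z] by (simp add: f_def characters_def)
  then show "f \<noteq> (\<lambda>_. 0)" by auto
  show "periodic_lat n f" unfolding periodic_lat_def
  proof (intro allI)
    fix v i
    have m: "(- (x + m)) mod m = (- x) mod m" for x m :: int
    proof -
      have "(- (x + m)) mod m = (- x + (-1) * m) mod m" by simp
      also have "\<dots> = (- x) mod m" by (rule mod_mult_self1)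
      finally show ?thesis .
    qed
    have "red n (- (v(i := v i + int (n i)))) = red n (- v)"
      unfolding red_def fun_eq_iff using m by simp
    then show "f (v(i := v i + int (n i))) = f v" by (simp add: f_def)
  qed
  show "harmonic t a f" unfolding harmonic_def
  proof (intro allI impI)
    fix j assume j: "j < t"
    have "conv_lat f (a j) g = 0" for g
    proof -
      have "conv_lat f (a j) g = (\<Sum>w\<in>{w. a j w \<noteq> 0}. \<chi> (red n (- g)) * (a j w * \<chi> (red n w)))"
        unfolding conv_lat_def
      proof (rule sum.cong)
        fix w
        have "red n (- (g - w)) = red n (red n (- g) + red n w)" by (simp add: red_add_red)
        then have "f (g - w) = \<chi> (red n (- g)) * \<chi> (red n w)"
          using char_mult[OF ch red_Gset[OF npos] red_Gset[OF npos]] by (simp add: f_def)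
        then show "f (g - w) * a j w = \<chi> (red n (- g)) * (a j w * \<chi> (red n w))" by simp
      qed simp
      also have "\<dots> = \<chi> (red n (- g)) * fhat n (pushfwd n (a j)) \<chi>"
        by (simp add: sum_distrib_left fiber[OF fa[rule_format, OF j] npos, symmetric])
      also have "fhat n (pushfwd n (a j)) \<chi> = 0" using chi j by (simp add: Vset_def)
      finally show ?thesis by simp
    qed
    then show "conv_lat f (a j) = (\<lambda>_. 0)" by auto
  qed
qed

theorem theorem3p2:
  fixes p :: nat and n :: "'s::finite \<Rightarrow> nat" and t :: nat
    and a :: "nat \<Rightarrow> 's lat \<Rightarrow> 'k::field" and q0 r0 :: nat
  assumes K: "alg_closure_GFp p TYPE('k)"
    and a_fin: "\<forall>j<t. fin_supp (a j)"
    and n_pos: "\<forall>i. n i > 0" and n_cop: "\<forall>i. coprime (n i) p"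
    and q0_def: "q0 = p ^ r0" and r0_pos: "r0 > 0"
    and q0_prop: "\<forall>j<t. \<forall>\<chi>\<in>characters n.
                    fhat n (pushfwd n (a j)) \<chi> ^ q0 = fhat n (pushfwd n (a j)) \<chi>"
    and q0_min: "\<forall>r>0. (\<forall>j<t. \<forall>\<chi>\<in>characters n.
                    fhat n (pushfwd n (a j)) \<chi> ^ (p ^ r) = fhat n (pushfwd n (a j)) \<chi>)
                  \<longrightarrow> r0 \<le> r"
  shows
    "((\<exists>f. f \<noteq> (\<lambda>_. 0) \<and> periodic_lat n f \<and> harmonic t a f)
        \<longleftrightarrow> Vset n t (\<lambda>j. pushfwd n (a j)) \<noteq> {})
     \<and> (Vset n t (\<lambda>j. pushfwd n (a j)) \<noteq> {}
        \<longleftrightarrow> (\<exists>\<xi>::'s \<Rightarrow> 'k. (\<forall>i. \<xi> i \<noteq> 0 \<and> \<xi> i ^ n i = 1)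
               \<and> (\<forall>j<t. symbol_eval (a j) \<xi> = 0)))
     \<and> kerG n t (\<lambda>j. pushfwd n (a j))
         = principal_ideal n
             (conv_prod n (\<lambda>j g. deltaG n g - DeltaG_pow n (pushfwd n (a j)) (q0 - 1) (deltaG n) g) t)
     \<and> orth_proj n
         (op_prod (\<lambda>j f g. f g - DeltaG_pow n (pushfwd n (a j)) (q0 - 1) f g) t)
         (kerG n t (\<lambda>j. pushfwd n (a j)))
     \<and> (t = 1 \<longrightarrow>
          ((\<exists>f. f \<noteq> (\<lambda>_. 0) \<and> periodic_lat n f \<and> harmonic t a f)
             \<longleftrightarrow> DeltaG_pow n (pushfwd n (a 0)) (q0 - 1) (deltaG n) \<noteq> deltaG n)
        \<and> (DeltaG_pow n (pushfwd n (a 0)) (q0 - 1) (deltaG n) \<noteq> deltaG n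
             \<longleftrightarrow> (\<exists>f\<in>FG n. DeltaG_pow n (pushfwd n (a 0)) (q0 - 1) f \<noteq> f))
        \<and> ((\<exists>f. f \<noteq> (\<lambda>_. 0) \<and> periodic_lat n f \<and> harmonic t a f)
             \<longleftrightarrow> \<not> periodic_seq (\<lambda>k. DeltaG_pow n (pushfwd n (a 0)) k (deltaG n))))"
proof -
  have prime: "prime p" and charK: "CHAR('k) = p"
    and alg: "\<forall>P::'k poly. degree P > 0 \<longrightarrow> (\<exists>x. poly P x = 0)"
    using K by (auto simp: alg_closure_GFp_def)
  have npos: "\<forall>i. n i > 0" using n_pos .
  have ofn: "of_nat (n i) \<noteq> (0::'k)" for i
  proof
    assume "of_nat (n i) = (0::'k)"
    then have "p dvd n i" using charK by (simp add: of_nat_eq_0_iff_char_dvd)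
    then have "p = 1" using coprime_common_divisor_nat[OF n_cop[rule_format, of i]] by auto
    then show False using prime by simp
  qed
  have L2: "\<forall>i. \<forall>P::'k poly. P \<noteq> 0 \<longrightarrow> degree P < n i \<longrightarrow> (\<exists>z. z ^ n i = 1 \<and> poly P z \<noteq> 0)"
    using nonvanish_root[OF alg] npos ofn by blast
  have "p \<ge> 2" using prime by (rule prime_ge_2_nat)
  have "p ^ 1 \<le> p ^ r0" by (rule power_increasing) (use r0_pos \<open>p \<ge> 2\<close> in auto)
  then have q2: "q0 \<ge> 2" using \<open>p \<ge> 2\<close> q0_def by simp
  define B where "B = (\<lambda>j. pushfwd n (a j))"
  have e1: "fhat n (B j) \<chi> ^ (q0 - 1) = 1"
    if "\<chi> \<in> characters n" "j < t" "fhat n (B j) \<chi> \<noteq> 0" for \<chi> j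
  proof -
    let ?x = "fhat n (B j) \<chi>"
    have "?x ^ q0 = ?x" using q0_prop that by (simp add: B_def)
    moreover have "?x ^ q0 = ?x * ?x ^ (q0 - 1)" using q2 by (metis Suc_diff_1 less_le_trans pos2 power_Suc)
    ultimately show ?thesis using that(3) by simp
  qed
  have e0: "fhat n (B j) \<chi> ^ (q0 - 1) = 0" if "fhat n (B j) \<chi> = 0" for \<chi> j
    using that q2 by simp
  define E where "E \<chi> = (\<Prod>j<t. 1 - fhat n (B j) \<chi> ^ (q0 - 1))" for \<chi>
  have Eval: "E \<chi> = (if \<forall>j<t. fhat n (B j) \<chi> = 0 then 1 else 0)" if "\<chi> \<in> characters n" for \<chi>
  proof (cases "\<forall>j<t. fhat n (B j) \<chi> = 0")
    case True
    then have "E \<chi> = (\<Prod>j<t. 1)" unfolding E_def using q2 by (intro prod.cong) (auto simp: e0)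
    then show ?thesis using True by simp
  next
    case False
    then obtain j where j: "j < t" "fhat n (B j) \<chi> \<noteq> 0" by auto
    have "E \<chi> = 0" unfolding E_def
      by (rule prod_zero) (use j e1[OF that j] in auto)
    then show ?thesis using False by simp
  qed
  have E01: "E \<chi> = 0 \<or> E \<chi> = 1" if "\<chi> \<in> characters n" for \<chi>
    using Eval[OF that] by simp
  define F where "F = (\<lambda>j g. deltaG n g - DeltaG_pow n (B j) (q0 - 1) (deltaG n) g)"
  define T where "T = (\<lambda>j f g. f g - DeltaG_pow n (B j) (q0 - 1) f g)"
  have hatF: "fhat n (F j) \<chi> = 1 - fhat n (B j) \<chi> ^ (q0 - 1)" if "\<chi> \<in> characters n" for \<chi> j
    unfolding F_def by (simp add: fhat_diff fhat_pow[OF npos that] fhat_delta[OF npos that])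
  have CP: "conv_prod n F m \<in> FG n \<and> (\<forall>\<chi>\<in>characters n. fhat n (conv_prod n F m) \<chi> = (\<Prod>j<m. 1 - fhat n (B j) \<chi> ^ (q0 - 1)))" for m
  proof (induction m)
    case 0
    show ?case by (simp add: FG_delta[OF npos] fhat_delta[OF npos])
  next
    case (Suc m)
    have "conv_prod n F (Suc m) = convG n (conv_prod n F m) (F m)" by simp
    moreover have "\<forall>\<chi>\<in>characters n. fhat n (convG n (conv_prod n F m) (F m)) \<chi> = (\<Prod>j<Suc m. 1 - fhat n (B j) \<chi> ^ (q0 - 1))"
    proof
      fix \<chi> :: "'s lat \<Rightarrow> 'k" assume ch: "\<chi> \<in> characters n"
      have "fhat n (convG n (conv_prod n F m) (F m)) \<chi> = fhat n (conv_prod n F m) \<chi> * fhat n (F m) \<chi>"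
        by (rule fhat_conv[OF npos ch])
      also have "\<dots> = (\<Prod>j<m. 1 - fhat n (B j) \<chi> ^ (q0 - 1)) * (1 - fhat n (B m) \<chi> ^ (q0 - 1))"
        using Suc ch hatF[OF ch] by simp
      finally show "fhat n (convG n (conv_prod n F m) (F m)) \<chi> = (\<Prod>j<Suc m. 1 - fhat n (B j) \<chi> ^ (q0 - 1))"
        by simp
    qed
    ultimately show ?case using FG_conv by simp
  qed
  have OP: "op_prod T m f \<in> FG n \<and> (\<forall>\<chi>\<in>characters n. fhat n (op_prod T m f) \<chi> = fhat n f \<chi> * (\<Prod>j<m. 1 - fhat n (B j) \<chi> ^ (q0 - 1)))"
    if "f \<in> FG n" for m f
  proof (induction m)
    case 0 then show ?case using that by simp
  next
    case (Suc m)
    let ?X = "op_prod T m f"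
    have eq: "op_prod T (Suc m) f = (\<lambda>g. ?X g - DeltaG_pow n (B m) (q0 - 1) ?X g)" by (simp add: T_def)
    have "(\<lambda>g. ?X g - DeltaG_pow n (B m) (q0 - 1) ?X g) \<in> FG n"
      using Suc FG_diff FG_pow by blast
    moreover have "\<forall>\<chi>\<in>characters n. fhat n (\<lambda>g. ?X g - DeltaG_pow n (B m) (q0 - 1) ?X g) \<chi> = fhat n f \<chi> * (\<Prod>j<Suc m. 1 - fhat n (B j) \<chi> ^ (q0 - 1))"
    proof
      fix \<chi> :: "'s lat \<Rightarrow> 'k" assume ch: "\<chi> \<in> characters n"
      have "fhat n (\<lambda>g. ?X g - DeltaG_pow n (B m) (q0 - 1) ?X g) \<chi> = fhat n ?X \<chi> * (1 - fhat n (B m) \<chi> ^ (q0 - 1))"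
        by (simp add: fhat_diff fhat_pow[OF npos ch] right_diff_distrib)
      also have "\<dots> = fhat n f \<chi> * (\<Prod>j<m. 1 - fhat n (B j) \<chi> ^ (q0 - 1)) * (1 - fhat n (B m) \<chi> ^ (q0 - 1))"
        using Suc ch by simp
      finally show "fhat n (\<lambda>g. ?X g - DeltaG_pow n (B m) (q0 - 1) ?X g) \<chi> = fhat n f \<chi> * (\<Prod>j<Suc m. 1 - fhat n (B j) \<chi> ^ (q0 - 1))"
        by (simp add: mult.assoc)
    qed
    ultimately show ?case unfolding eq by blast
  qed
  have ker: "f \<in> kerG n t B \<longleftrightarrow> (\<forall>\<chi>\<in>characters n. fhat n f \<chi> * E \<chi> = fhat n f \<chi>)"
    if f: "f \<in> FG n" for f
  proof
    assume fk: "f \<in> kerG n t B"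
    show "\<forall>\<chi>\<in>characters n. fhat n f \<chi> * E \<chi> = fhat n f \<chi>"
    proof
      fix \<chi> :: "'s lat \<Rightarrow> 'k" assume ch: "\<chi> \<in> characters n"
      show "fhat n f \<chi> * E \<chi> = fhat n f \<chi>"
      proof (cases "fhat n f \<chi> = 0")
        case False
        have "fhat n (B j) \<chi> = 0" if "j < t" for j
        proof -
          have "convG n f (B j) = (\<lambda>_. 0)" using fk that by (simp add: kerG_def)
          then have "fhat n f \<chi> * fhat n (B j) \<chi> = 0"
            using fhat_conv[OF npos ch, of f "B j"] by (simp add: fhat_zero)
          then show ?thesis using False by simp
        qed
        then show ?thesis using Eval[OF ch] by simp
      qed simp
    qed
  next
    assume H: "\<forall>\<chi>\<in>characters n. fhat n f \<chi> * E \<chi> = fhat n f \<chi>"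
    have "convG n f (B j) = (\<lambda>_. 0)" if j: "j < t" for j
    proof (rule complete[OF npos L2 FG_conv], intro ballI)
      fix \<chi> :: "'s lat \<Rightarrow> 'k" assume ch: "\<chi> \<in> characters n"
      show "fhat n (convG n f (B j)) \<chi> = 0"
      proof (cases "fhat n f \<chi> = 0")
        case False
        then have "E \<chi> = 1" using H ch by (metis mult_cancel_left1)
        then have "fhat n (B j) \<chi> = 0" using Eval[OF ch] j by (auto split: if_splits)
        then show ?thesis by (simp add: fhat_conv[OF npos ch])
      qed (simp add: fhat_conv[OF npos ch])
    qed
    then show "f \<in> kerG n t B" using f by (simp add: kerG_def)
  qed
  define P where "P = conv_prod n F t"
  have PFG: "P \<in> FG n" and hatP: "\<And>\<chi>. \<chi> \<in> characters n \<Longrightarrow> fhat n P \<chi> = E \<chi>"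
    using CP[of t] by (auto simp: P_def E_def)
  have partb1: "kerG n t B = principal_ideal n P"
  proof
    show "kerG n t B \<subseteq> principal_ideal n P"
    proof
      fix f assume fk: "f \<in> kerG n t B"
      then have f: "f \<in> FG n" by (simp add: kerG_def)
      have "convG n P f = f"
      proof (rule complete_eq[OF npos L2 FG_conv f], intro ballI)
        fix \<chi> :: "'s lat \<Rightarrow> 'k" assume ch: "\<chi> \<in> characters n"
        show "fhat n (convG n P f) \<chi> = fhat n f \<chi>"
        proof -
          have "fhat n f \<chi> * E \<chi> = fhat n f \<chi>" using ker[OF f] fk ch by blast
          then show ?thesis by (simp add: fhat_conv[OF npos ch] hatP[OF ch] mult.commute)
        qed
      qed
      then have "f = convG n P f \<and> f \<in> FG n" using f by simp
      then show "f \<in> principal_ideal n P" unfolding principal_ideal_def by blast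
    qed
  next
    show "principal_ideal n P \<subseteq> kerG n t B"
    proof
      fix f assume "f \<in> principal_ideal n P"
      then obtain c where c: "c \<in> FG n" and fc: "f = convG n P c" by (auto simp: principal_ideal_def)
      have f: "f \<in> FG n" using fc FG_conv by simp
      show "f \<in> kerG n t B" unfolding ker[OF f]
      proof
        fix \<chi> :: "'s lat \<Rightarrow> 'k" assume ch: "\<chi> \<in> characters n"
        show "fhat n f \<chi> * E \<chi> = fhat n f \<chi>"
        proof -
          have "fhat n f \<chi> = E \<chi> * fhat n c \<chi>" by (simp add: fc fhat_conv[OF npos ch] hatP[OF ch])
          then show ?thesis using E01[OF ch] by auto
        qed
      qed
    qed
  qed
  have partb2: "orth_proj n (op_prod T t) (kerG n t B)"
    unfolding orth_proj_def
  proof (intro conjI ballI)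
    fix f :: "'s lat \<Rightarrow> 'k" assume f: "f \<in> FG n"
    have Tf: "op_prod T t f \<in> FG n" and hatT: "\<And>\<chi>. \<chi> \<in> characters n \<Longrightarrow> fhat n (op_prod T t f) \<chi> = fhat n f \<chi> * E \<chi>"
      using OP[OF f, of t] by (auto simp: E_def)
    show "op_prod T t f \<in> kerG n t B" unfolding ker[OF Tf]
    proof
      fix \<chi> :: "'s lat \<Rightarrow> 'k" assume ch: "\<chi> \<in> characters n"
      show "fhat n (op_prod T t f) \<chi> * E \<chi> = fhat n (op_prod T t f) \<chi>"
        using E01[OF ch] hatT[OF ch] by auto
    qed
    fix w :: "'s lat \<Rightarrow> 'k" assume wk: "w \<in> kerG n t B"
    then have w: "w \<in> FG n" by (simp add: kerG_def)
    define u where "u = (\<lambda>g. f g - op_prod T t f g)"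
    have u: "u \<in> FG n" unfolding u_def by (rule FG_diff[OF f Tf])
    have "convG n u w = (\<lambda>_. 0)"
    proof (rule complete[OF npos L2 FG_conv], intro ballI)
      fix \<chi> :: "'s lat \<Rightarrow> 'k" assume ch: "\<chi> \<in> characters n"
      have "fhat n w \<chi> * E \<chi> = fhat n w \<chi>" using ker[OF w] wk ch by simp
      moreover have "fhat n (convG n u w) \<chi> = (fhat n f \<chi> - fhat n f \<chi> * E \<chi>) * fhat n w \<chi>"
        by (simp add: fhat_conv[OF npos ch] u_def fhat_diff hatT[OF ch])
      ultimately show "fhat n (convG n u w) \<chi> = 0"
        using E01[OF ch] by auto
    qed
    then have "convG n u w 0 = 0" by simp
    then have "(\<Sum>g\<in>Gset n. u g * w (red n (- g))) = 0"
      using zero_Gset[OF npos] by (simp add: convG_def)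
    then show "innerG n (\<lambda>g. f g - op_prod T t f g) w = 0"
      by (simp add: innerG_def u_def)
  next
    fix w :: "'s lat \<Rightarrow> 'k" assume wk: "w \<in> kerG n t B"
    then have w: "w \<in> FG n" by (simp add: kerG_def)
    have hatT: "\<And>\<chi>. \<chi> \<in> characters n \<Longrightarrow> fhat n (op_prod T t w) \<chi> = fhat n w \<chi> * E \<chi>"
      using OP[OF w, of t] by (auto simp: E_def)
    have Tw: "op_prod T t w \<in> FG n" using OP[OF w, of t] by simp
    show "op_prod T t w = w"
    proof (rule complete_eq[OF npos L2 Tw w], intro ballI)
      fix \<chi> :: "'s lat \<Rightarrow> 'k" assume ch: "\<chi> \<in> characters n"
      show "fhat n (op_prod T t w) \<chi> = fhat n w \<chi>"
        using ker[OF w] wk ch hatT[OF ch] by simp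
    qed
  qed
  define I where "I = (\<exists>f. f \<noteq> (\<lambda>_. 0) \<and> periodic_lat n f \<and> harmonic t a f)"
  define X where "X = (\<exists>\<xi>::'s \<Rightarrow> 'k. (\<forall>i. \<xi> i \<noteq> 0 \<and> \<xi> i ^ n i = 1) \<and> (\<forall>j<t. symbol_eval (a j) \<xi> = 0))"
  have I_imp: "\<exists>z. (\<forall>i. z i ^ n i = 1) \<and> chi z \<in> Vset n t B" if I
  proof -
    obtain f where f: "f \<noteq> (\<lambda>_. 0)" "periodic_lat n f" "harmonic t a f" using \<open>I\<close> by (auto simp: I_def)
    define f0 where "f0 = (\<lambda>g. if g \<in> Gset n then f g else 0)"
    have f0FG: "f0 \<in> FG n" by (simp add: f0_def FG_def)
    obtain v where v: "f v \<noteq> 0" using f(1) by auto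
    have "f0 (red n v) \<noteq> 0" using v periodic_red[OF f(2)] red_Gset[OF npos] by (simp add: f0_def)
    then have f0nz: "f0 \<noteq> (\<lambda>_. 0)" by auto
    have cz: "convG n f0 (B j) = (\<lambda>_. 0)" if j: "j < t" for j
    proof
      fix g
      show "convG n f0 (B j) g = 0"
      proof (cases "g \<in> Gset n")
        case True
        have "convG n f0 (B j) g = conv_lat f (a j) g"
          unfolding f0_def B_def by (rule conv_relation[OF npos a_fin[rule_format, OF j] f(2) True])
        also have "\<dots> = 0" using f(3) j by (simp add: harmonic_def)
        finally show ?thesis .
      qed (simp add: convG_def)
    qed
    obtain z where zr: "\<forall>i. z i ^ n i = 1" and zf: "fhat n f0 (chi z) \<noteq> 0"
      using L3[OF npos L2 f0FG f0nz] by blast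
    have zc: "chi z \<in> characters n" by (rule chi_char[OF npos zr])
    have "fhat n (B j) (chi z) = 0" if j: "j < t" for j
    proof -
      have "fhat n f0 (chi z) * fhat n (B j) (chi z) = 0"
        using fhat_conv[OF npos zc, of f0 "B j"] cz[OF j] by (simp add: fhat_zero)
      then show ?thesis using zf by simp
    qed
    then show ?thesis using zr zc by (auto simp: Vset_def)
  qed
  have V_I: I if Vne: "Vset n t B \<noteq> {}"
  proof -
    obtain \<chi> :: "'s lat \<Rightarrow> 'k" where "\<chi> \<in> Vset n t B" using Vne by auto
    then show I unfolding I_def by (rule construct_ii[OF npos a_fin, unfolded B_def[symmetric]])
  qed
  have X_I: I if X
  proof -
    obtain \<xi> :: "'s \<Rightarrow> 'k" where xi: "\<forall>i. \<xi> i \<noteq> 0 \<and> \<xi> i ^ n i = 1" and sy: "\<forall>j<t. symbol_eval (a j) \<xi> = 0"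
      using \<open>X\<close> by (auto simp: X_def)
    show I unfolding I_def using construct_iii[OF npos xi sy] by blast
  qed
  have I_X: X if I
  proof -
    obtain z where zr: "\<forall>i. z i ^ n i = 1" and zV: "chi z \<in> Vset n t B" using I_imp[OF \<open>I\<close>] by blast
    have nz: "\<forall>i. z i \<noteq> 0" using root_nz[OF npos zr] by auto
    define \<xi> where "\<xi> = (\<lambda>i. inverse (z i))"
    have xi: "\<forall>i. \<xi> i \<noteq> 0 \<and> \<xi> i ^ n i = 1" using nz zr by (simp add: \<xi>_def power_inverse)
    have "symbol_eval (a j) \<xi> = 0" if j: "j < t" for j
    proof -
      have "symbol_eval (a j) \<xi> = (\<Sum>v\<in>{v. a j v \<noteq> 0}. a j v * chi z (red n v))"
        unfolding symbol_eval_def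
      proof (rule sum.cong)
        fix v
        have "(\<Prod>i\<in>UNIV. \<xi> i powi (- v i)) = chi z v"
          unfolding chi_def \<xi>_def by (simp add: power_int_minus power_int_inverse)
        then show "a j v * (\<Prod>i\<in>UNIV. \<xi> i powi (- v i)) = a j v * chi z (red n v)"
          using chi_red[OF npos zr, of v] by simp
      qed simp
      also have "\<dots> = fhat n (B j) (chi z)"
        unfolding B_def by (rule fiber[OF a_fin[rule_format, OF j] npos])
      also have "\<dots> = 0" using zV j by (simp add: Vset_def)
      finally show ?thesis .
    qed
    then show X unfolding X_def using xi by blast
  qed
  have I_V: "Vset n t B \<noteq> {}" if I using I_imp[OF that] by blast
  have parta1: "I \<longleftrightarrow> Vset n t B \<noteq> {}" using I_V V_I by blast
  have parta2: "Vset n t B \<noteq> {} \<longleftrightarrow> X" using I_V V_I I_X X_I by blast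
  have partc: "t = 1 \<longrightarrow>
          ((I \<longleftrightarrow> DeltaG_pow n (B 0) (q0 - 1) (deltaG n) \<noteq> deltaG n)
        \<and> (DeltaG_pow n (B 0) (q0 - 1) (deltaG n) \<noteq> deltaG n
             \<longleftrightarrow> (\<exists>f\<in>FG n. DeltaG_pow n (B 0) (q0 - 1) f \<noteq> f))
        \<and> (I \<longleftrightarrow> \<not> periodic_seq (\<lambda>k. DeltaG_pow n (B 0) k (deltaG n))))"
  proof
    assume t1: "t = 1"
    have VB: "Vset n t B \<noteq> {} \<longleftrightarrow> (\<exists>\<chi>\<in>characters n. fhat n (B 0) \<chi> = 0)"
      using t1 by (auto simp: Vset_def)
    have hatD: "fhat n (DeltaG_pow n (B 0) k f) \<chi> = fhat n f \<chi> * fhat n (B 0) \<chi> ^ k"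
      if "\<chi> \<in> characters n" for k f \<chi> by (rule fhat_pow[OF npos that])
    have dFG: "deltaG n \<in> FG n" by (rule FG_delta[OF npos])
    have Dall: "DeltaG_pow n (B 0) (q0 - 1) f = f"
      if nz: "\<forall>\<chi>\<in>characters n. fhat n (B 0) \<chi> \<noteq> 0" and f: "f \<in> FG n" for f :: "'s lat \<Rightarrow> 'k"
    proof (rule complete_eq[OF npos L2 FG_pow[OF f] f], intro ballI)
      fix \<chi> :: "'s lat \<Rightarrow> 'k" assume ch: "\<chi> \<in> characters n"
      show "fhat n (DeltaG_pow n (B 0) (q0 - 1) f) \<chi> = fhat n f \<chi>"
        using hatD[OF ch] e1[OF ch _ nz[rule_format, OF ch]] t1 by simp
    qed
    have Dfix: "DeltaG_pow n (B 0) (q0 - 1) (deltaG n) = deltaG n \<longleftrightarrow> (\<forall>\<chi>\<in>characters n. fhat n (B 0) \<chi> \<noteq> 0)"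
    proof
      assume eq: "DeltaG_pow n (B 0) (q0 - 1) (deltaG n) = deltaG n"
      show "\<forall>\<chi>\<in>characters n. fhat n (B 0) \<chi> \<noteq> 0"
      proof (intro ballI notI)
        fix \<chi> :: "'s lat \<Rightarrow> 'k" assume ch: "\<chi> \<in> characters n" and z: "fhat n (B 0) \<chi> = 0"
        have "fhat n (DeltaG_pow n (B 0) (q0 - 1) (deltaG n)) \<chi> = 0"
          using hatD[OF ch] z q2 by simp
        then show False using eq fhat_delta[OF npos ch] by simp
      qed
    next
      assume "\<forall>\<chi>\<in>characters n. fhat n (B 0) \<chi> \<noteq> 0"
      then show "DeltaG_pow n (B 0) (q0 - 1) (deltaG n) = deltaG n" using Dall dFG by blast
    qed
    have IB: "I \<longleftrightarrow> (\<exists>\<chi>\<in>characters n. fhat n (B 0) \<chi> = 0)" using parta1 VB by simp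
    show "(I \<longleftrightarrow> DeltaG_pow n (B 0) (q0 - 1) (deltaG n) \<noteq> deltaG n)
        \<and> (DeltaG_pow n (B 0) (q0 - 1) (deltaG n) \<noteq> deltaG n
             \<longleftrightarrow> (\<exists>f\<in>FG n. DeltaG_pow n (B 0) (q0 - 1) f \<noteq> f))
        \<and> (I \<longleftrightarrow> \<not> periodic_seq (\<lambda>k. DeltaG_pow n (B 0) k (deltaG n)))"
    proof (intro conjI)
      show "I \<longleftrightarrow> DeltaG_pow n (B 0) (q0 - 1) (deltaG n) \<noteq> deltaG n" using IB Dfix by blast
      show "DeltaG_pow n (B 0) (q0 - 1) (deltaG n) \<noteq> deltaG n
             \<longleftrightarrow> (\<exists>f\<in>FG n. DeltaG_pow n (B 0) (q0 - 1) f \<noteq> f)"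
        using Dfix Dall dFG by blast
      show "I \<longleftrightarrow> \<not> periodic_seq (\<lambda>k. DeltaG_pow n (B 0) k (deltaG n))"
      proof
        assume I
        then obtain \<chi> :: "'s lat \<Rightarrow> 'k" where ch: "\<chi> \<in> characters n" and z: "fhat n (B 0) \<chi> = 0"
          using IB by blast
        show "\<not> periodic_seq (\<lambda>k. DeltaG_pow n (B 0) k (deltaG n))"
        proof
          assume "periodic_seq (\<lambda>k. DeltaG_pow n (B 0) k (deltaG n))"
          then obtain T' where T': "T' > 0" "\<forall>k. DeltaG_pow n (B 0) (k + T') (deltaG n) = DeltaG_pow n (B 0) k (deltaG n)"
            by (auto simp: periodic_seq_def)
          have "DeltaG_pow n (B 0) T' (deltaG n) = deltaG n" using T'(2)[rule_format, of 0] by (simp add: DeltaG_pow_def)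
          then have "fhat n (DeltaG_pow n (B 0) T' (deltaG n)) \<chi> = 1" using fhat_delta[OF npos ch] by simp
          moreover have "fhat n (DeltaG_pow n (B 0) T' (deltaG n)) \<chi> = 0" using hatD[OF ch] z T'(1) by simp
          ultimately show False by simp
        qed
      next
        assume np: "\<not> periodic_seq (\<lambda>k. DeltaG_pow n (B 0) k (deltaG n))"
        show I
        proof (rule ccontr)
          assume "\<not> I"
          then have nz: "\<forall>\<chi>\<in>characters n. fhat n (B 0) \<chi> \<noteq> 0" using IB by blast
          have "DeltaG_pow n (B 0) (k + (q0 - 1)) (deltaG n) = DeltaG_pow n (B 0) k (deltaG n)" for k
          proof (rule complete_eq[OF npos L2 FG_pow[OF dFG] FG_pow[OF dFG]], intro ballI)
            fix \<chi> :: "'s lat \<Rightarrow> 'k" assume ch: "\<chi> \<in> characters n"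
            have "fhat n (B 0) \<chi> ^ (q0 - 1) = 1" using e1[OF ch _ nz[rule_format, OF ch]] t1 by simp
            then show "fhat n (DeltaG_pow n (B 0) (k + (q0 - 1)) (deltaG n)) \<chi> = fhat n (DeltaG_pow n (B 0) k (deltaG n)) \<chi>"
              using hatD[OF ch] by (simp add: power_add)
          qed
          then have "periodic_seq (\<lambda>k. DeltaG_pow n (B 0) k (deltaG n))"
            unfolding periodic_seq_def using q2 by (intro exI[of _ "q0 - 1"]) auto
          then show False using np by simp
        qed
      qed
    qed
  qed
  have all: "(I \<longleftrightarrow> Vset n t B \<noteq> {}) \<and> (Vset n t B \<noteq> {} \<longleftrightarrow> X)
     \<and> kerG n t B = principal_ideal n (conv_prod n F t)
     \<and> orth_proj n (op_prod T t) (kerG n t B)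
     \<and> (t = 1 \<longrightarrow>
          ((I \<longleftrightarrow> DeltaG_pow n (B 0) (q0 - 1) (deltaG n) \<noteq> deltaG n)
        \<and> (DeltaG_pow n (B 0) (q0 - 1) (deltaG n) \<noteq> deltaG n
             \<longleftrightarrow> (\<exists>f\<in>FG n. DeltaG_pow n (B 0) (q0 - 1) f \<noteq> f))
        \<and> (I \<longleftrightarrow> \<not> periodic_seq (\<lambda>k. DeltaG_pow n (B 0) k (deltaG n)))))"
    using parta1 parta2 partb1[unfolded P_def] partb2 partc by blast
  then show ?thesis unfolding I_def X_def F_def T_def B_def .
qed

end
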